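(* Let $k\ge 1$, let $A$ be a set of integers, each at least $3$, and let $O_k$ be the set of odd integers less than $2k+1$. Then, as $n\to\infty$, $$ex(n,C_{2k+1},\mathcal C_A)=\Theta\big(ex(n,C_{2k+1},\mathcal C_{A\setminus O_k})\big).$$
   Context: $C_k$ denotes the cycle with $k$ vertices; for a set $B$ of integers each at least 3, $\mathcal C_B=\{C_b:b\in B\}$. For a graph $H$ and a family of graphs $\mathcal F$, $ex(n,H,\mathcal F)$ is the maximum number of subgraphs isomorphic to $H$ in an $n$-vertex graph containing no member of $\mathcal F$ as a subgraph. *)

theory Defs
  imports Main "HOL-Library.Landau_Symbols"
begin

definition graph_on :: "nat \<Rightarrow> nat set set \<Rightarrow> bool" where
  "graph_on n E \<longleftrightarrow> (\<forall>e\<in>E. \<exists>u v. e = {u, v} \<and> u \<noteq> v \<and> u < n \<and> v < n)"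

definition cycle_edges :: "nat list \<Rightarrow> nat set set" where
  "cycle_edges vs = {{vs ! i, vs ! ((i + 1) mod length vs)} | i. i < length vs}"

(* The subgraphs of E isomorphic to C_k, identified with their edge sets. *)
definition cycle_copies :: "nat \<Rightarrow> nat set set \<Rightarrow> nat set set set" where
  "cycle_copies k E = {S. S \<subseteq> E \<and> (\<exists>vs. length vs = k \<and> distinct vs \<and> S = cycle_edges vs)}"

definition contains_cycle :: "nat \<Rightarrow> nat set set \<Rightarrow> bool" where
  "contains_cycle k E \<longleftrightarrow> cycle_copies k E \<noteq> {}"

definition ex_cycle :: "nat \<Rightarrow> nat \<Rightarrow> nat set \<Rightarrow> nat" where
  "ex_cycle n l B = Max {card (cycle_copies l E) | E. graph_on n E \<and> (\<forall>b\<in>B. \<not> contains_cycle b E)}"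

definition odd_below :: "nat \<Rightarrow> nat set" where
  "odd_below k = {m. odd m \<and> m < 2 * k + 1}"

end

theory Submission
  imports Defs "HOL-Library.FuncSet"
begin

lemma graph_sub: "graph_on n E \<Longrightarrow> E \<subseteq> Pow {0..<n}"
  unfolding graph_on_def by fastforce

lemma graph_finite: "graph_on n E \<Longrightarrow> finite E"
proof -
  assume "graph_on n E"
  then have "E \<subseteq> Pow {0..<n}" by (rule graph_sub)
  then show "finite E" by (rule finite_subset) simp
qed

lemma copies_finite: "finite E \<Longrightarrow> finite (cycle_copies l E)"
  unfolding cycle_copies_def by (rule finite_subset[of _ "Pow E"]) auto

lemma copies_mono: "E' \<subseteq> E \<Longrightarrow> cycle_copies b E' \<subseteq> cycle_copies b E"
  unfolding cycle_copies_def by auto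

lemma contains_mono: "E' \<subseteq> E \<Longrightarrow> contains_cycle b E' \<Longrightarrow> contains_cycle b E"
  unfolding contains_cycle_def using copies_mono by blast

lemma graph_on_mono: "E' \<subseteq> E \<Longrightarrow> graph_on n E \<Longrightarrow> graph_on n E'"
  unfolding graph_on_def by blast

lemma empty_no_cycle: "b \<ge> 1 \<Longrightarrow> \<not> contains_cycle b {}"
proof
  assume "b \<ge> 1" "contains_cycle b {}"
  then obtain vs where "length vs = b" "cycle_edges vs = {}"
    unfolding contains_cycle_def cycle_copies_def by auto
  moreover have "{vs ! 0, vs ! ((0 + 1) mod length vs)} \<in> cycle_edges vs"
    using \<open>b \<ge> 1\<close> \<open>length vs = b\<close> unfolding cycle_edges_def by auto
  ultimately show False by simp
qed

lemma ex_set_finite: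
  "finite {card (cycle_copies l E) | E. graph_on n E \<and> (\<forall>b\<in>B. \<not> contains_cycle b E)}"
proof -
  have "{card (cycle_copies l E) | E. graph_on n E \<and> (\<forall>b\<in>B. \<not> contains_cycle b E)}
        \<subseteq> (\<lambda>E. card (cycle_copies l E)) ` Pow (Pow {0..<n})"
    using graph_sub by blast
  then show ?thesis by (rule finite_subset) auto
qed

lemma ex_ge:
  assumes "graph_on n E" "\<forall>b\<in>B. \<not> contains_cycle b E"
  shows "card (cycle_copies l E) \<le> ex_cycle n l B"
  unfolding ex_cycle_def using assms by (intro Max_ge[OF ex_set_finite]) blast

lemma ex_attained:
  assumes "\<forall>b\<in>B. b \<ge> 1"
  shows "\<exists>E. graph_on n E \<and> (\<forall>b\<in>B. \<not> contains_cycle b E) \<and> ex_cycle n l B = card (cycle_copies l E)"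
proof -
  have ne: "{card (cycle_copies l E) | E. graph_on n E \<and> (\<forall>b\<in>B. \<not> contains_cycle b E)} \<noteq> {}"
    using assms empty_no_cycle unfolding graph_on_def by blast
  have "ex_cycle n l B \<in> {card (cycle_copies l E) | E. graph_on n E \<and> (\<forall>b\<in>B. \<not> contains_cycle b E)}"
    unfolding ex_cycle_def by (rule Max_in[OF ex_set_finite ne])
  then show ?thesis by auto
qed

lemma cyc_shift_sum:
  fixes f :: "nat \<Rightarrow> int"
  assumes "m > 0"
  shows "(\<Sum>i<m. f ((i + 1) mod m)) = (\<Sum>i<m. f i)"
proof -
  have inj: "inj_on (\<lambda>i. (i + 1) mod m) {..<m}"
  proof (rule inj_onI)
    fix i j assume "i \<in> {..<m}" "j \<in> {..<m}" "(i + 1) mod m = (j + 1) mod m"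
    moreover have "(i + 1) mod m = (if i + 1 = m then 0 else i + 1)"
      using \<open>i \<in> {..<m}\<close> by (cases "i + 1 = m") auto
    moreover have "(j + 1) mod m = (if j + 1 = m then 0 else j + 1)"
      using \<open>j \<in> {..<m}\<close> by (cases "j + 1 = m") auto
    ultimately show "i = j" by (auto split: if_splits)
  qed
  have sub: "(\<lambda>i. (i + 1) mod m) ` {..<m} \<subseteq> {..<m}" using assms by auto
  have "(\<lambda>i. (i + 1) mod m) ` {..<m} = {..<m}"
    by (rule endo_inj_surj[OF _ sub inj]) simp
  then have "bij_betw (\<lambda>i. (i + 1) mod m) {..<m} {..<m}"
    using inj by (simp add: bij_betw_def)
  then show ?thesis by (rule sum.reindex_bij_betw)
qed

lemma no_short_odd:
  assumes edges: "\<forall>e\<in>E'. \<exists>u v. e = {u, v} \<and> c v = (c u + 1) mod q"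
    and "odd m" "m < q"
  shows "\<not> contains_cycle m E'"
proof
  assume "contains_cycle m E'"
  then obtain vs where len: "length vs = m" and sub: "cycle_edges vs \<subseteq> E'"
    unfolding contains_cycle_def cycle_copies_def by auto
  have m0: "m > 0" using \<open>odd m\<close> by (cases m) auto
  have q0: "q > 0" using \<open>m < q\<close> by simp
  define x where "x i = int (c (vs ! i))" for i
  define y where "y i = int (c (vs ! ((i + 1) mod m)))" for i
  define eps where "eps i = (if y i mod int q = (x i + 1) mod int q then 1 else - 1 :: int)" for i
  have key: "eps i mod int q = (y i - x i) mod int q \<and> (eps i = 1 \<or> eps i = -1)" if "i < m" for i
  proof -
    have "{vs ! i, vs ! ((i + 1) mod m)} \<in> E'"
      using sub that len unfolding cycle_edges_def by auto
    then obtain u v where uv: "{vs ! i, vs ! ((i + 1) mod m)} = {u, v}" "c v = (c u + 1) mod q"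
      using edges by blast
    have cv0: "int (c v) = (int (c u) + 1) mod int q"
      using uv(2) by (simp add: zmod_int add.commute)
    then have cv: "int (c v) mod int q = (int (c u) + 1) mod int q" by simp
    from uv(1) have "(vs ! i = u \<and> vs ! ((i + 1) mod m) = v) \<or> (vs ! i = v \<and> vs ! ((i + 1) mod m) = u)"
      by (auto simp: doubleton_eq_iff)
    then have alt: "y i mod int q = (x i + 1) mod int q \<or> x i mod int q = (y i + 1) mod int q"
      using cv unfolding x_def y_def by auto
    show ?thesis
    proof (cases "y i mod int q = (x i + 1) mod int q")
      case True
      have "(y i - x i) mod int q = (y i mod int q - x i) mod int q" by (simp add: mod_diff_left_eq)
      also have "\<dots> = ((x i + 1) mod int q - x i) mod int q" using True by simp
      also have "\<dots> = (x i + 1 - x i) mod int q" by (simp add: mod_diff_left_eq)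
      finally show ?thesis using True unfolding eps_def by simp
    next
      case False
      then have xy: "x i mod int q = (y i + 1) mod int q" using alt by simp
      have "(y i - x i) mod int q = (y i - x i mod int q) mod int q" by (simp add: mod_diff_right_eq)
      also have "\<dots> = (y i - (y i + 1) mod int q) mod int q" using xy by simp
      also have "\<dots> = (y i - (y i + 1)) mod int q" by (simp add: mod_diff_right_eq)
      finally show ?thesis using False unfolding eps_def by simp
    qed
  qed
  have e1: "(\<Sum>i<m. eps i mod int q) = (\<Sum>i<m. (y i - x i) mod int q)"
  proof (rule sum.cong[OF refl])
    fix i assume "i \<in> {..<m}"
    then show "eps i mod int q = (y i - x i) mod int q" using key by blast
  qed
  have tel: "(\<Sum>i<m. (y i - x i)) = 0"
    using cyc_shift_sum[OF m0, of x] unfolding y_def x_def by (simp add: sum_subtractf)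
  have "(\<Sum>i<m. eps i) mod int q = (\<Sum>i<m. eps i mod int q) mod int q"
    by (rule mod_sum_eq[symmetric])
  also have "\<dots> = (\<Sum>i<m. (y i - x i) mod int q) mod int q" by (simp only: e1)
  also have "\<dots> = (\<Sum>i<m. (y i - x i)) mod int q" by (rule mod_sum_eq)
  also have "\<dots> = 0" by (simp only: tel) simp
  finally have s0: "(\<Sum>i<m. eps i) mod int q = 0" .
  have "\<bar>\<Sum>i<m. eps i\<bar> \<le> (\<Sum>i<m. \<bar>eps i\<bar>)" by (rule sum_abs)
  also have "\<dots> = (\<Sum>i<m. 1)"
  proof (rule sum.cong[OF refl])
    fix i assume "i \<in> {..<m}"
    then have "eps i = 1 \<or> eps i = -1" using key by blast
    then show "\<bar>eps i\<bar> = 1" by auto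
  qed
  finally have sb: "\<bar>\<Sum>i<m. eps i\<bar> < int q" using \<open>m < q\<close> by simp
  have e2: "(\<Sum>i<m. eps i mod 2) = (\<Sum>i<m. 1)"
  proof (rule sum.cong[OF refl])
    fix i assume "i \<in> {..<m}"
    then have "eps i = 1 \<or> eps i = -1" using key by blast
    then show "eps i mod 2 = 1" by auto
  qed
  have "(\<Sum>i<m. eps i) mod 2 = (\<Sum>i<m. eps i mod 2) mod 2"
    by (rule mod_sum_eq[symmetric])
  also have "\<dots> = int m mod 2" by (simp only: e2) simp
  finally have "(\<Sum>i<m. eps i) mod 2 = int m mod 2" .
  moreover have "int m mod 2 = 1" using \<open>odd m\<close> by presburger
  ultimately have "(\<Sum>i<m. eps i) mod 2 = 1" by simp
  then have "odd (\<Sum>i<m. eps i)" by (simp only: odd_iff_mod_2_eq_one)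
  moreover have "(\<Sum>i<m. eps i) = 0"
  proof -
    have "int q dvd (\<Sum>i<m. eps i)" using s0 by (simp add: dvd_eq_mod_eq_0)
    then obtain t where tq: "(\<Sum>i<m. eps i) = int q * t" by (rule dvdE)
    have "int q * \<bar>t\<bar> < int q * 1" using sb unfolding tq by (simp add: abs_mult)
    then have "\<bar>t\<bar> < 1" using q0 by (simp add: mult_less_cancel_left)
    then have "t = 0" by simp
    then show ?thesis using \<open>(\<Sum>i<m. eps i) = int q * t\<close> by simp
  qed
  ultimately show False by simp
qed


definition col :: "nat \<Rightarrow> (nat \<Rightarrow> nat) \<Rightarrow> nat set set \<Rightarrow> nat set set" where
  "col q c E = {e\<in>E. \<exists>u v. e = {u, v} \<and> c v = (c u + 1) mod q}"

lemma card_filter_sum: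
  "finite A \<Longrightarrow> card {x\<in>A. P x} = (\<Sum>x\<in>A. if P x then 1 else 0 :: nat)"
  by (simp add: sum.If_cases Int_def conj_commute)

lemma survive_count:
  assumes "graph_on n E" "S \<in> cycle_copies q E" "q \<ge> 1"
  shows "q ^ (n - q) \<le> card {c \<in> PiE {0..<n} (\<lambda>_. {0..<q}). S \<subseteq> col q c E}"
proof -
  obtain vs where S: "S \<subseteq> E" "length vs = q" "distinct vs" "S = cycle_edges vs"
    using assms(2) unfolding cycle_copies_def by auto
  have vsn: "set vs \<subseteq> {0..<n}"
  proof
    fix x assume "x \<in> set vs"
    then obtain i where i: "i < q" "vs ! i = x" using S(2) by (auto simp: in_set_conv_nth)
    have "{vs ! i, vs ! ((i + 1) mod q)} \<in> E" using S i unfolding cycle_edges_def by auto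
    then obtain u v where "{vs ! i, vs ! ((i + 1) mod q)} = {u, v}" "u < n" "v < n"
      using assms(1) unfolding graph_on_def by blast
    then show "x \<in> {0..<n}" using i by (auto simp: doubleton_eq_iff)
  qed
  define idx where "idx x = (SOME j. j < q \<and> vs ! j = x)" for x
  have idx: "idx (vs ! i) = i" if "i < q" for i
  proof -
    have "\<exists>j. j < q \<and> vs ! j = vs ! i" using that by blast
    then have "idx (vs ! i) < q \<and> vs ! (idx (vs ! i)) = vs ! i" unfolding idx_def by (rule someI_ex)
    then show ?thesis using nth_eq_iff_index_eq[OF S(3), of "idx (vs ! i)" i] S(2) that by simp
  qed
  define G where "G = PiE ({0..<n} - set vs) (\<lambda>_. {0..<q::nat})"
  define h where "h g = (\<lambda>x. if x \<in> set vs then idx x else g x)" for g :: "nat \<Rightarrow> nat"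
  have "card ({0..<n} - set vs) = n - q"
    using card_Diff_subset[OF finite_set vsn] distinct_card[OF S(3)] S(2) by simp
  then have cardG: "card G = q ^ (n - q)"
    unfolding G_def by (simp add: card_PiE)
  have inj: "inj_on h G"
  proof (rule inj_onI)
    fix g1 g2 assume g: "g1 \<in> G" "g2 \<in> G" "h g1 = h g2"
    show "g1 = g2"
    proof (rule PiE_ext[OF g(1)[unfolded G_def] g(2)[unfolded G_def]])
      fix x assume "x \<in> {0..<n} - set vs"
      then show "g1 x = g2 x" using fun_cong[OF g(3), of x] unfolding h_def by simp
    qed
  qed
  have img: "h ` G \<subseteq> {c \<in> PiE {0..<n} (\<lambda>_. {0..<q}). S \<subseteq> col q c E}"
  proof
    fix c assume "c \<in> h ` G"
    then obtain g where g: "g \<in> G" "c = h g" by blast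
    have cv: "c (vs ! i) = i" if "i < q" for i
      unfolding g(2) h_def using that S(2) idx by simp
    have "c \<in> PiE {0..<n} (\<lambda>_. {0..<q})"
    proof (rule PiE_I)
      fix x assume x: "x \<in> {0..<n}"
      show "c x \<in> {0..<q}"
      proof (cases "x \<in> set vs")
        case True
        then obtain i where "i < q" "vs ! i = x" using S(2) by (auto simp: in_set_conv_nth)
        then show ?thesis using cv by auto
      next
        case False
        then have "c x = g x" using g(2) unfolding h_def by simp
        moreover have "g x \<in> {0..<q}" using g(1) x False unfolding G_def by (auto simp: PiE_iff)
        ultimately show ?thesis by simp
      qed
    next
      fix x assume x: "x \<notin> {0..<n}"
      then have "x \<notin> set vs" using vsn by auto
      then have "c x = g x" using g(2) unfolding h_def by simp
      moreover have "x \<notin> {0..<n} - set vs" using x by simp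
      then have "g x = undefined" using PiE_arb[OF g(1)[unfolded G_def]] by blast
      ultimately show "c x = undefined" by simp
    qed
    moreover have "S \<subseteq> col q c E"
    proof
      fix e assume e: "e \<in> S"
      then obtain i where i: "i < q" "e = {vs ! i, vs ! ((i + 1) mod q)}"
        using S unfolding cycle_edges_def by auto
      have "(i + 1) mod q < q" using assms(3) by simp
      then have "c (vs ! ((i + 1) mod q)) = (c (vs ! i) + 1) mod q" using cv i(1) by simp
      then show "e \<in> col q c E" using e S(1) i unfolding col_def by blast
    qed
    ultimately show "c \<in> {c \<in> PiE {0..<n} (\<lambda>_. {0..<q}). S \<subseteq> col q c E}" by blast
  qed
  have fin: "finite {c \<in> PiE {0..<n} (\<lambda>_. {0..<q::nat}). S \<subseteq> col q c E}"
    by (rule finite_subset[of _ "PiE {0..<n} (\<lambda>_. {0..<q})"]) (auto simp: finite_PiE)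
  show ?thesis using card_inj_on_le[OF inj img fin] cardG by simp
qed

lemma main_avg:
  assumes "graph_on n E" "q \<ge> 1"
  shows "\<exists>c. card (cycle_copies q E) \<le> q ^ q * card (cycle_copies q (col q c E))"
proof (rule ccontr)
  assume "\<not> ?thesis"
  then have lt: "\<And>c. q ^ q * card (cycle_copies q (col q c E)) < card (cycle_copies q E)"
    by (simp add: not_le)
  define F where "F = PiE {0..<n} (\<lambda>_. {0..<q::nat})"
  define C where "C = cycle_copies q E"
  have finF: "finite F" unfolding F_def by (simp add: finite_PiE)
  have cardF: "card F = q ^ n" unfolding F_def by (simp add: card_PiE)
  have Fne: "F \<noteq> {}" unfolding F_def using assms(2) by (simp add: PiE_eq_empty_iff)
  have finE: "finite E" by (rule graph_finite[OF assms(1)])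
  have finC: "finite C" unfolding C_def by (rule copies_finite[OF finE])
  have colsub: "col q c E \<subseteq> E" for c unfolding col_def by auto
  have le1: "card {S\<in>C. S \<subseteq> col q c E} \<le> card (cycle_copies q (col q c E))" for c
  proof (rule card_mono)
    show "finite (cycle_copies q (col q c E))"
      by (rule copies_finite[OF finite_subset[OF colsub finE]])
    show "{S \<in> C. S \<subseteq> col q c E} \<subseteq> cycle_copies q (col q c E)"
      unfolding C_def cycle_copies_def by auto
  qed
  have swap: "(\<Sum>c\<in>F. card {S\<in>C. S \<subseteq> col q c E}) = (\<Sum>S\<in>C. card {c\<in>F. S \<subseteq> col q c E})"
  proof -
    have "(\<Sum>c\<in>F. card {S\<in>C. S \<subseteq> col q c E})
        = (\<Sum>c\<in>F. \<Sum>S\<in>C. if S \<subseteq> col q c E then 1 else 0)"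
      using finC by (simp add: card_filter_sum)
    also have "\<dots> = (\<Sum>S\<in>C. \<Sum>c\<in>F. if S \<subseteq> col q c E then 1 else 0)"
      by (rule sum.swap)
    also have "\<dots> = (\<Sum>S\<in>C. card {c\<in>F. S \<subseteq> col q c E})"
      using finF by (simp add: card_filter_sum)
    finally show ?thesis .
  qed
  have "card C * q ^ (n - q) = (\<Sum>S\<in>C. q ^ (n - q))" by simp
  also have "\<dots> \<le> (\<Sum>S\<in>C. card {c\<in>F. S \<subseteq> col q c E})"
    by (rule sum_mono) (use survive_count[OF assms(1) _ assms(2)] in \<open>auto simp: F_def C_def\<close>)
  also have "\<dots> \<le> (\<Sum>c\<in>F. card (cycle_copies q (col q c E)))"
    unfolding swap[symmetric] by (rule sum_mono) (rule le1)
  finally have low: "card C * q ^ (n - q) \<le> (\<Sum>c\<in>F. card (cycle_copies q (col q c E)))" .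
  have "q ^ q * (\<Sum>c\<in>F. card (cycle_copies q (col q c E)))
      = (\<Sum>c\<in>F. q ^ q * card (cycle_copies q (col q c E)))" by (simp add: sum_distrib_left)
  also have "\<dots> < (\<Sum>c\<in>F. card C)"
    by (rule sum_strict_mono[OF finF Fne]) (use lt in \<open>simp add: C_def\<close>)
  also have "\<dots> = q ^ n * card C" using cardF by simp
  finally have up: "q ^ q * (\<Sum>c\<in>F. card (cycle_copies q (col q c E))) < q ^ n * card C" .
  have "q ^ n \<le> q ^ q * q ^ (n - q)"
    unfolding power_add[symmetric] using assms(2) by (intro power_increasing) auto
  then have "q ^ n * card C \<le> q ^ q * (card C * q ^ (n - q))" by (simp add: mult_ac)
  also have "\<dots> \<le> q ^ q * (\<Sum>c\<in>F. card (cycle_copies q (col q c E)))"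
    using low by simp
  finally show False using up by simp
qed

theorem lemma2:
  fixes k :: nat and A :: "nat set"
  assumes "k \<ge> 1" and "\<forall>a\<in>A. a \<ge> 3"
  shows "(\<lambda>n. real (ex_cycle n (2 * k + 1) A))
           \<in> \<Theta>(\<lambda>n. real (ex_cycle n (2 * k + 1) (A - odd_below k)))"
proof -
  define q where "q = 2 * k + 1"
  have q1: "q \<ge> 1" unfolding q_def by simp
  have A1: "\<forall>b\<in>A. b \<ge> 1" using assms(2) by auto
  have A1': "\<forall>b\<in>A - odd_below k. b \<ge> 1" using A1 by auto
  have le1: "ex_cycle n q A \<le> ex_cycle n q (A - odd_below k)" for n
  proof -
    obtain E where E: "graph_on n E" "\<forall>b\<in>A. \<not> contains_cycle b E" "ex_cycle n q A = card (cycle_copies q E)"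
      using ex_attained[OF A1] by blast
    show ?thesis using ex_ge[of n E "A - odd_below k" q] E by auto
  qed
  have le2: "ex_cycle n q (A - odd_below k) \<le> q ^ q * ex_cycle n q A" for n
  proof -
    obtain E where E: "graph_on n E" "\<forall>b\<in>A - odd_below k. \<not> contains_cycle b E"
      "ex_cycle n q (A - odd_below k) = card (cycle_copies q E)"
      using ex_attained[OF A1'] by blast
    obtain c where c: "card (cycle_copies q E) \<le> q ^ q * card (cycle_copies q (col q c E))"
      using main_avg[OF E(1) q1] by blast
    have sub: "col q c E \<subseteq> E" unfolding col_def by auto
    have g: "graph_on n (col q c E)" by (rule graph_on_mono[OF sub E(1)])
    have av: "\<forall>b\<in>A. \<not> contains_cycle b (col q c E)"
    proof
      fix b assume b: "b \<in> A"
      show "\<not> contains_cycle b (col q c E)"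
      proof (cases "b \<in> odd_below k")
        case True
        then have "odd b" "b < q" unfolding odd_below_def q_def by auto
        moreover have "\<forall>e\<in>col q c E. \<exists>u v. e = {u, v} \<and> c v = (c u + 1) mod q"
          unfolding col_def by blast
        ultimately show ?thesis using no_short_odd by blast
      next
        case False
        then show ?thesis using E(2) b contains_mono[OF sub] by blast
      qed
    qed
    have "card (cycle_copies q (col q c E)) \<le> ex_cycle n q A" by (rule ex_ge[OF g av])
    then have "q ^ q * card (cycle_copies q (col q c E)) \<le> q ^ q * ex_cycle n q A"
      by (rule mult_le_mono2)
    then show ?thesis using E(3) c by linarith
  qed
  show ?thesis unfolding q_def[symmetric]
  proof (rule bigthetaI)
    show "(\<lambda>n. real (ex_cycle n q A)) \<in> O(\<lambda>n. real (ex_cycle n q (A - odd_below k)))"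
      by (rule landau_o.bigI[of 1]) (use le1 in auto)
    have "(\<lambda>n. real (ex_cycle n q (A - odd_below k))) \<in> O(\<lambda>n. real (ex_cycle n q A))"
    proof (rule landau_o.bigI[of "real (q ^ q)"])
      show "0 < real (q ^ q)" using q1 by simp
      show "\<forall>\<^sub>F x in at_top. norm (real (ex_cycle x q (A - odd_below k)))
              \<le> real (q ^ q) * norm (real (ex_cycle x q A))"
      proof (rule always_eventually, rule allI)
        fix x
        have "real (ex_cycle x q (A - odd_below k)) \<le> real (q ^ q * ex_cycle x q A)"
          using le2[of x] by (simp only: of_nat_le_iff)
        then show "norm (real (ex_cycle x q (A - odd_below k))) \<le> real (q ^ q) * norm (real (ex_cycle x q A))"
          by simp
      qed
    qed
    then show "(\<lambda>n. real (ex_cycle n q A)) \<in> \<Omega>(\<lambda>n. real (ex_cycle n q (A - odd_below k)))"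
      by (simp add: bigomega_iff_bigo)
  qed
qed

end
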